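(* Let $N\ge 6$ with $N\equiv 2\pmod 4$. Then for every $k$ with $1\le k<N/4$, $$\mathrm{scale}_{N/2}[k]=\mathrm{scale}_N[2k]\,\frac{\mathrm{GenScale}[N/2]}{\mathrm{GenScale}[N]}.$$ Consequently $\mathrm{scale}_N[N/2-2]=\mathrm{GenScale}[N/2]$.
   Context: For an integer $n\ge3$ and $1\le k<n/2$, $\mathrm{scale}_n[k]=\tan(\pi/n)/\tan(k\pi/n)$. $\langle n/2\rangle$ is the greatest integer strictly less than $n/2$ and $\mathrm{GenScale}[n]=\mathrm{scale}_n[\langle n/2\rangle]$. *)

theory Defs
  imports Complex_Main
begin

definition scale :: "nat \<Rightarrow> nat \<Rightarrow> real" where
  "scale n k = tan (pi / real n) / tan (real k * pi / real n)"

definition half_below :: "nat \<Rightarrow> nat" where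
  "half_below n = (n - 1) div 2"

definition GenScale :: "nat \<Rightarrow> real" where
  "GenScale n = scale n (half_below n)"

end

theory Submission
  imports Defs
begin

theorem lemma6:
  fixes N :: nat
  assumes "N \<ge> 6" and "N mod 4 = 2"
  shows "(\<forall>k::nat. 1 \<le> k \<and> 4 * k < N \<longrightarrow>
            scale (N div 2) k = scale N (2 * k) * (GenScale (N div 2) / GenScale N))
         \<and> scale N (N div 2 - 2) = GenScale (N div 2)"
proof -
  define m where "m = N div 4"
  have N: "N = 4*m+2" using assms(2) unfolding m_def by presburger
  have m1: "m \<ge> 1" using assms(1) N by linarith
  have M: "N div 2 = 2*m+1" using N by simp
  have hM: "half_below (N div 2) = m" using M by (simp add: half_below_def)
  have hN: "half_below N = 2*m" using N by (simp add: half_below_def)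
  define a where "a = tan (pi / real (2*m+1))"
  define b where "b = tan (pi / real N)"
  define s where "s = tan (real m * pi / real (2*m+1))"
  have rN: "real N = 2 * real (2*m+1)" using N by simp
  have b0: "b > 0" unfolding b_def
    by (rule tan_gt_zero) (use rN m1 in \<open>auto simp: field_simps\<close>)
  have sx: "real m * pi / real (2*m+1) = pi/2 - pi / real N"
    using rN by (simp add: field_simps)
  have s: "s = inverse b" unfolding s_def b_def sx tan_cot ..
  have s0: "s \<noteq> 0" using s b0 by simp
  have GM: "GenScale (N div 2) = a / s"
    unfolding GenScale_def hM unfolding scale_def a_def s_def M by simp
  have GN: "GenScale N = b / s"
  proof -
    have "real (2*m) * pi / real N = real m * pi / real (2*m+1)"
      using rN by (simp add: field_simps)
    then show ?thesis unfolding GenScale_def hN scale_def b_def s_def by simp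
  qed
  have part1: "scale (N div 2) k = scale N (2 * k) * (GenScale (N div 2) / GenScale N)" for k
  proof -
    have e: "real (2*k) * pi / real N = real k * pi / real (2*m+1)"
      using rN by (simp add: field_simps)
    have "scale N (2 * k) = b / tan (real k * pi / real (2*m+1))"
      unfolding scale_def e b_def ..
    moreover have "scale (N div 2) k = a / tan (real k * pi / real (2*m+1))"
      unfolding scale_def M a_def ..
    ultimately show ?thesis unfolding GM GN
      using b0 s0 by (simp add: field_simps)
  qed
  have part2: "scale N (N div 2 - 2) = GenScale (N div 2)"
  proof -
    have e: "real (2*m+1-2) * pi / real N = pi/2 - pi / real (2*m+1)"
      using rN m1 by (simp add: of_nat_diff field_simps)
    have "scale N (N div 2 - 2) = b * a"
      unfolding scale_def M e tan_cot a_def b_def by (simp add: field_simps)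
    then show ?thesis using GM s b0 by (simp add: field_simps)
  qed
  show ?thesis using part1 part2 by blast
qed

end
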